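(* Let $N,d\ge1$, $\lambda,\tau>0$ with $\lambda\tau\le\frac12$, and let $\psi:[0,\infty)\to(0,\infty)$ be positive, nonincreasing, differentiable with $\psi(r)\le1$ for all $r\ge0$. Let $(x_i,v_i)_{i=1}^N$ solve $$\dot x_i(t)=v_i(t),\qquad \dot v_i(t)=\frac{\lambda}{N}\sum_{j=1}^N\psi(|x_i(t-\tau)-x_j(t-\tau)|)\,(v_j(t-\tau)-v_i(t-\tau)),\qquad t>0,$$ with initial data $(x_i,v_i)=(x_i^0,v_i^0)$ on $[-\tau,0]$, $(x_i^0,v_i^0)\in C([-\tau,0];\mathbb{R}^{2d})\cap C^1((-\tau,0);\mathbb{R}^{2d})$. Then $$\varphi(t)\ge\psi\big(d_X(0)+\sqrt{2L^0}\,t\big)\qquad\text{for all }t>\tau.$$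
   Context: $\varphi(t):=\min_{i,j}\psi(|x_i(t)-x_j(t)|)$ and $d_X(t):=\max_{i,j}|x_i(t)-x_j(t)|$. $V(t):=\frac12\sum_{i,j=1}^N|v_i(t)-v_j(t)|^2$, $D(t):=\frac12\sum_{i,j=1}^N\psi(|x_i(t)-x_j(t)|)\,|v_j(t)-v_i(t)|^2$, and $L^0:=(2\lambda\tau+1)e^{2\lambda\tau}\max_{\vartheta\in[-\tau,0]}V(\vartheta)+4\tau\lambda^3\int_{-\tau}^0\int_\theta^0 D(s)\,ds\,d\theta$. *)

theory Defs
  imports "HOL-Analysis.Analysis"
begin

definition phiF :: "nat \<Rightarrow> (real \<Rightarrow> real) \<Rightarrow> (nat \<Rightarrow> real \<Rightarrow> real^'d) \<Rightarrow> real \<Rightarrow> real" where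
  "phiF N \<psi> x t = Min {\<psi> (norm (x i t - x j t)) | i j. i < N \<and> j < N}"

definition dXF :: "nat \<Rightarrow> (nat \<Rightarrow> real \<Rightarrow> real^'d) \<Rightarrow> real \<Rightarrow> real" where
  "dXF N x t = Max {norm (x i t - x j t) | i j. i < N \<and> j < N}"

definition VF :: "nat \<Rightarrow> (nat \<Rightarrow> real \<Rightarrow> real^'d) \<Rightarrow> real \<Rightarrow> real" where
  "VF N v t = (1/2) * (\<Sum>i<N. \<Sum>j<N. (norm (v i t - v j t))\<^sup>2)"

definition DF :: "nat \<Rightarrow> (real \<Rightarrow> real) \<Rightarrow> (nat \<Rightarrow> real \<Rightarrow> real^'d) \<Rightarrow> (nat \<Rightarrow> real \<Rightarrow> real^'d) \<Rightarrow> real \<Rightarrow> real" where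
  "DF N \<psi> x v t = (1/2) * (\<Sum>i<N. \<Sum>j<N. \<psi> (norm (x i t - x j t)) * (norm (v j t - v i t))\<^sup>2)"

definition L0F :: "nat \<Rightarrow> real \<Rightarrow> real \<Rightarrow> (real \<Rightarrow> real) \<Rightarrow> (nat \<Rightarrow> real \<Rightarrow> real^'d) \<Rightarrow> (nat \<Rightarrow> real \<Rightarrow> real^'d) \<Rightarrow> real" where
  "L0F N lam \<tau> \<psi> x v =
     (2*lam*\<tau> + 1) * exp (2*lam*\<tau>) * (SUP s\<in>{-\<tau>..0}. VF N v s)
     + 4 * \<tau> * lam^3 * integral {-\<tau>..0} (\<lambda>th. integral {th..0} (DF N \<psi> x v))"

end

theory Submission
  imports Defs
begin



lemma sum_swap_anti:
  fixes g :: "nat \<Rightarrow> nat \<Rightarrow> 'a::real_vector"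
  assumes "\<And>i j. g i j = - g j i"
  shows "(\<Sum>i<N. \<Sum>j<N. g i j) = 0"
proof -
  have "(\<Sum>i<N. \<Sum>j<N. g i j) = (\<Sum>j<N. \<Sum>i<N. g i j)" by (rule sum.swap)
  also have "\<dots> = (\<Sum>j<N. \<Sum>i<N. - g j i)" by (subst assms) simp
  also have "\<dots> = - (\<Sum>j<N. \<Sum>i<N. g j i)" by (simp add: sum_negf)
  finally have h: "(\<Sum>i<N. \<Sum>j<N. g i j) = - (\<Sum>i<N. \<Sum>j<N. g i j)" .
  have "(\<Sum>i<N. \<Sum>j<N. g i j) + (\<Sum>i<N. \<Sum>j<N. g i j) = (\<Sum>i<N. \<Sum>j<N. g i j) + - (\<Sum>i<N. \<Sum>j<N. g i j)"
    using h by (rule arg_cong)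
  then have "(\<Sum>i<N. \<Sum>j<N. g i j) + (\<Sum>i<N. \<Sum>j<N. g i j) = 0" by simp
  then have "2 *\<^sub>R (\<Sum>i<N. \<Sum>j<N. g i j) = 0" by (simp add: scaleR_2)
  then show ?thesis by simp
qed

lemma key_identity:
  fixes a b :: "nat \<Rightarrow> 'a::real_inner" and p :: "nat \<Rightarrow> nat \<Rightarrow> real" and lam :: real
  assumes psym: "\<And>i j. p i j = p j i" and N: "N > 0"
  defines "G \<equiv> \<lambda>i. (lam / real N) *\<^sub>R (\<Sum>j<N. p i j *\<^sub>R (b j - b i))"
  shows "(\<Sum>i<N. \<Sum>j<N. (a i - a j) \<bullet> (G i - G j))
       = - lam * (\<Sum>i<N. \<Sum>j<N. p i j * ((a i - a j) \<bullet> (b i - b j)))"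
proof -
  have sumG: "(\<Sum>i<N. G i) = 0"
  proof -
    have "(\<Sum>i<N. \<Sum>j<N. p i j *\<^sub>R (b j - b i)) = 0"
      by (rule sum_swap_anti) (subst psym, simp add: algebra_simps)
    thus ?thesis unfolding G_def by (simp add: scaleR_sum_right[symmetric])
  qed
  have e1: "(\<Sum>i<N. \<Sum>j<N. (a i - a j) \<bullet> (G i - G j))
      = (\<Sum>i<N. \<Sum>j<N. (a i - a j) \<bullet> G i) + (\<Sum>i<N. \<Sum>j<N. (a j - a i) \<bullet> G j)"
    by (simp add: inner_diff sum_subtractf algebra_simps sum.distrib)
  have e2: "(\<Sum>i<N. \<Sum>j<N. (a j - a i) \<bullet> G j) = (\<Sum>i<N. \<Sum>j<N. (a i - a j) \<bullet> G i)"
    by (rule sum.swap)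
  have e3: "(\<Sum>i<N. \<Sum>j<N. (a i - a j) \<bullet> G i) = real N * (\<Sum>i<N. a i \<bullet> G i)"
  proof -
    have "(\<Sum>i<N. \<Sum>j<N. (a i - a j) \<bullet> G i) = (\<Sum>i<N. real N * (a i \<bullet> G i)) - (\<Sum>i<N. \<Sum>j<N. a j \<bullet> G i)"
      by (simp add: inner_diff_left sum_subtractf)
    also have "(\<Sum>i<N. \<Sum>j<N. a j \<bullet> G i) = 0"
      using sumG by (simp add: inner_sum_left[symmetric] inner_sum_right[symmetric])
    finally show ?thesis by (simp add: sum_distrib_left)
  qed
  have e4: "real N * (\<Sum>i<N. a i \<bullet> G i) = lam * (\<Sum>i<N. \<Sum>j<N. p i j * (a i \<bullet> (b j - b i)))"
    using N unfolding G_def by (simp add: inner_sum_right sum_distrib_left)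
  have e5: "(\<Sum>i<N. \<Sum>j<N. p i j * (a i \<bullet> (b j - b i))) = (\<Sum>i<N. \<Sum>j<N. p i j * (a j \<bullet> (b i - b j)))"
    by (subst sum.swap) (simp add: psym)
  have e6: "2 * (\<Sum>i<N. \<Sum>j<N. p i j * (a i \<bullet> (b j - b i))) = - (\<Sum>i<N. \<Sum>j<N. p i j * ((a i - a j) \<bullet> (b i - b j)))"
  proof -
    have "2 * (\<Sum>i<N. \<Sum>j<N. p i j * (a i \<bullet> (b j - b i))) =
       (\<Sum>i<N. \<Sum>j<N. p i j * (a i \<bullet> (b j - b i))) + (\<Sum>i<N. \<Sum>j<N. p i j * (a j \<bullet> (b i - b j)))"
      using e5 by simp
    also have "\<dots> = (\<Sum>i<N. \<Sum>j<N. p i j * (a i \<bullet> (b j - b i)) + p i j * (a j \<bullet> (b i - b j)))"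
      by (simp add: sum.distrib)
    also have "\<dots> = - (\<Sum>i<N. \<Sum>j<N. p i j * ((a i - a j) \<bullet> (b i - b j)))"
      by (simp add: sum_negf[symmetric] inner_diff algebra_simps)
    finally show ?thesis .
  qed
  show ?thesis using e1 e2 e3 e4 e6 by (simp add: algebra_simps)
qed

lemma norm2_deriv:
  fixes f :: "real \<Rightarrow> 'a::real_inner"
  assumes "(f has_vector_derivative f') (at t)"
  shows "((\<lambda>s. (norm (f s))\<^sup>2) has_real_derivative 2 * (f t \<bullet> f')) (at t)"
proof -
  have "((\<lambda>s. f s \<bullet> f s) has_derivative (\<lambda>h. f t \<bullet> (h *\<^sub>R f') + (h *\<^sub>R f') \<bullet> f t)) (at t)"
    using assms unfolding has_vector_derivative_def by (intro has_derivative_inner)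
  then have "((\<lambda>s. f s \<bullet> f s) has_real_derivative 2 * (f t \<bullet> f')) (at t)"
    unfolding has_field_derivative_def
    by (rule has_derivative_eq_rhs) (auto simp: inner_commute algebra_simps)
  then show ?thesis by (simp add: power2_norm_eq_inner)
qed





lemma int_CS:
  fixes g :: "real \<Rightarrow> real"
  assumes ab: "a \<le> b" and cg: "continuous_on {a..b} g"
  shows "(integral {a..b} g)\<^sup>2 \<le> (b - a) * integral {a..b} (\<lambda>s. (g s)\<^sup>2)"
proof (cases "a = b")
  case True then show ?thesis by simp
next
  case False
  with ab have ab': "a < b" by simp
  define I where "I = integral {a..b} g"
  define c where "c = I / (b - a)"
  have ig: "g integrable_on {a..b}" using cg by (rule integrable_continuous_real)
  have ig2: "(\<lambda>s. (g s)\<^sup>2) integrable_on {a..b}"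
    by (rule integrable_continuous_real) (intro continuous_intros cg)
  have "0 \<le> integral {a..b} (\<lambda>s. (g s - c)\<^sup>2)"
    by (rule integral_nonneg, rule integrable_continuous_real) (intro continuous_intros cg, simp)
  also have "integral {a..b} (\<lambda>s. (g s - c)\<^sup>2) = integral {a..b} (\<lambda>s. (g s)\<^sup>2 - 2 * c * g s + c\<^sup>2)"
    by (rule integral_cong) (simp add: power2_diff)
  also have "\<dots> = integral {a..b} (\<lambda>s. (g s)\<^sup>2) - 2 * c * I + c\<^sup>2 * (b - a)"
  proof -
    have h1: "((\<lambda>s. (g s)\<^sup>2) has_integral integral {a..b} (\<lambda>s. (g s)\<^sup>2)) {a..b}"
      using ig2 by (simp add: integrable_integral)
    have h2: "((\<lambda>s. 2 * c * g s) has_integral 2 * c * I) {a..b}"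
      unfolding I_def using ig by (intro has_integral_mult_right integrable_integral)
    have h3: "((\<lambda>s. c\<^sup>2) has_integral c\<^sup>2 * (b - a)) {a..b}"
      using has_integral_const_real[of "c\<^sup>2" a b] ab by (simp add: mult.commute)
    have "((\<lambda>s. (g s)\<^sup>2 - 2 * c * g s + c\<^sup>2) has_integral
        integral {a..b} (\<lambda>s. (g s)\<^sup>2) - 2 * c * I + c\<^sup>2 * (b - a)) {a..b}"
      by (intro has_integral_add has_integral_diff h1 h2 h3)
    then show ?thesis by (rule integral_unique)
  qed
  also have "\<dots> = integral {a..b} (\<lambda>s. (g s)\<^sup>2) - I\<^sup>2 / (b - a)"
  proof -
    have nz: "b - a \<noteq> 0" using ab' by simp
    have cb: "c * (b - a) = I" unfolding c_def using nz by simp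
    have e1: "c\<^sup>2 * (b - a) = c * I" using cb by (simp add: power2_eq_square mult.assoc)
    have e3: "c * I = I\<^sup>2 / (b - a)" unfolding c_def by (simp add: power2_eq_square)
    show ?thesis unfolding e1 e3[symmetric] by simp
  qed
  finally have "I\<^sup>2 / (b - a) \<le> integral {a..b} (\<lambda>s. (g s)\<^sup>2)" by simp
  then show ?thesis using ab' unfolding I_def by (simp add: pos_divide_le_eq mult.commute)
qed



lemma indef_deriv:
  fixes f :: "real \<Rightarrow> real"
  assumes c: "\<And>b. continuous_on {a..b} f" and x: "a < x"
  shows "((\<lambda>u. integral {a..u} f) has_real_derivative f x) (at x)"
proof -
  have "((\<lambda>u. integral {a..u} f) has_real_derivative f x) (at x within {a..x+1})"
    using x by (intro integral_has_real_derivative[OF c]) auto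
  moreover have "x \<in> interior {a..x+1}" using x by (simp add: interior_atLeastAtMost_real)
  ultimately show ?thesis by (metis at_within_interior)
qed

lemma indef_cont:
  fixes f :: "real \<Rightarrow> real"
  assumes "continuous_on {a..b} f"
  shows "continuous_on {a..b} (\<lambda>u. integral {a..u} f)"
  by (rule indefinite_integral_continuous_1[OF integrable_continuous_real[OF assms]])

locale cs =
  fixes N :: nat and lam \<tau> :: real and \<psi> :: "real \<Rightarrow> real"
    and x v :: "nat \<Rightarrow> real \<Rightarrow> real^'d"
  assumes N: "N \<ge> 1"
    and lam: "lam > 0" and tau: "\<tau> > 0" and lt: "lam * \<tau> \<le> 1/2"
    and psi_pos: "\<And>r. r \<ge> 0 \<Longrightarrow> \<psi> r > 0"
    and psi_le1: "\<And>r. r \<ge> 0 \<Longrightarrow> \<psi> r \<le> 1"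
    and psi_diff: "\<And>r. r \<ge> 0 \<Longrightarrow> \<psi> differentiable (at r within {0..})"
    and cont_x: "\<And>i. i < N \<Longrightarrow> continuous_on {-\<tau>..} (x i)"
    and cont_v: "\<And>i. i < N \<Longrightarrow> continuous_on {-\<tau>..} (v i)"
    and ode_x: "\<And>i t. i < N \<Longrightarrow> t > 0 \<Longrightarrow> (x i has_vector_derivative v i t) (at t)"
    and ode_v: "\<And>i t. i < N \<Longrightarrow> t > 0 \<Longrightarrow>
       (v i has_vector_derivative
          (lam / real N) *\<^sub>R (\<Sum>j<N. \<psi> (norm (x i (t - \<tau>) - x j (t - \<tau>))) *\<^sub>R
                                     (v j (t - \<tau>) - v i (t - \<tau>)))) (at t)"
begin

definition "ps i j s = \<psi> (norm (x i s - x j s))"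
definition "F i s = (lam / real N) *\<^sub>R (\<Sum>j<N. ps i j (s - \<tau>) *\<^sub>R (v j (s - \<tau>) - v i (s - \<tau>)))"

lemma ode_v': "i < N \<Longrightarrow> t > 0 \<Longrightarrow> (v i has_vector_derivative F i t) (at t)"
  using ode_v unfolding F_def ps_def by auto

lemma ps_sym: "ps i j s = ps j i s"
  unfolding ps_def by (simp add: norm_minus_commute)

lemma ps_pos: "ps i j s > 0" unfolding ps_def by (simp add: psi_pos)
lemma ps_le1: "ps i j s \<le> 1" unfolding ps_def by (simp add: psi_le1)

lemma psi_cont: "continuous_on {0..} \<psi>"
  unfolding continuous_on_eq_continuous_within
  using psi_diff differentiable_imp_continuous_within by auto

lemma ps_cont: "i < N \<Longrightarrow> j < N \<Longrightarrow> continuous_on {-\<tau>..} (ps i j)"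
  unfolding ps_def
  by (rule continuous_on_compose2[OF psi_cont]) (auto intro!: continuous_intros cont_x)

lemma D_cont: "continuous_on {-\<tau>..} (DF N \<psi> x v)"
  unfolding DF_def
  by (intro continuous_intros continuous_on_compose2[OF psi_cont]) (auto intro!: continuous_intros cont_x cont_v)

lemma V_cont: "continuous_on {-\<tau>..} (VF N v)"
  unfolding VF_def
  by (intro continuous_intros) (auto intro!: cont_v)

lemma D_nonneg: "DF N \<psi> x v s \<ge> 0"
  unfolding DF_def by (auto intro!: sum_nonneg mult_nonneg_nonneg less_imp_le[OF psi_pos])

lemma V_nonneg: "VF N v s \<ge> 0"
  unfolding VF_def by (auto intro!: sum_nonneg)


lemma V_deriv:
  assumes t: "t > 0"
  shows "(VF N v has_real_derivative
     - lam * (\<Sum>i<N. \<Sum>j<N. ps i j (t - \<tau>) * ((v i t - v j t) \<bullet> (v i (t - \<tau>) - v j (t - \<tau>))))) (at t)"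
proof -
  have d: "((\<lambda>s. (norm (v i s - v j s))\<^sup>2) has_real_derivative 2 * ((v i t - v j t) \<bullet> (F i t - F j t))) (at t)"
    if "i \<in> {..<N}" "j \<in> {..<N}" for i j
    using that t by (intro norm2_deriv has_vector_derivative_diff ode_v') auto
  have "(VF N v has_real_derivative (1/2) * (\<Sum>i<N. \<Sum>j<N. 2 * ((v i t - v j t) \<bullet> (F i t - F j t)))) (at t)"
    unfolding VF_def[abs_def]
    by (intro DERIV_cmult DERIV_sum d)
  moreover have "(1/2) * (\<Sum>i<N. \<Sum>j<N. 2 * ((v i t - v j t) \<bullet> (F i t - F j t)))
     = (\<Sum>i<N. \<Sum>j<N. ((v i t - v j t) \<bullet> (F i t - F j t)))"
    by (simp add: sum_distrib_left[symmetric])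
  moreover have "(\<Sum>i<N. \<Sum>j<N. ((v i t - v j t) \<bullet> (F i t - F j t))) =
     - lam * (\<Sum>i<N. \<Sum>j<N. ps i j (t - \<tau>) * ((v i t - v j t) \<bullet> (v i (t - \<tau>) - v j (t - \<tau>))))"
    unfolding F_def
    using key_identity[where a="\<lambda>i. v i t" and b = "\<lambda>i. v i (t - \<tau>)" and p = "\<lambda>i j. ps i j (t - \<tau>)" and N=N and lam=lam, OF ps_sym] N
    by simp
  ultimately show ?thesis by simp
qed




abbreviation "Mv \<equiv> (SUP s\<in>{-\<tau>..0}. VF N v s)"

lemma V_le_M: "s \<in> {-\<tau>..0} \<Longrightarrow> VF N v s \<le> Mv"
proof -
  assume s: "s \<in> {-\<tau>..0}"
  have "continuous_on {-\<tau>..0} (VF N v)" using V_cont by (rule continuous_on_subset) auto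
  then have "compact (VF N v ` {-\<tau>..0})" by (intro compact_continuous_image) auto
  then have "bdd_above (VF N v ` {-\<tau>..0})" by (intro bounded_imp_bdd_above compact_imp_bounded)
  then show ?thesis using s by (intro cSUP_upper)
qed

lemma M_nonneg: "0 \<le> Mv"
  using V_le_M[of 0] V_nonneg[of 0] tau by simp

lemma aux_half: "(p::real) \<le> c * d \<Longrightarrow> 2*(c*d) \<le> r \<Longrightarrow> p \<le> r/2" by linarith

lemma term_bound1:
  fixes a b :: "'a::real_inner"
  assumes p: "0 < p" "p \<le> 1"
  shows "- (p * (a \<bullet> b)) \<le> ((norm a)\<^sup>2 + (norm b)\<^sup>2) / 2"
proof -
  have h1: "- (a \<bullet> b) \<le> norm a * norm b"
    using Cauchy_Schwarz_ineq2[of a b] abs_ge_minus_self[of "a \<bullet> b"] by linarith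
  have h2: "2 * (norm a * norm b) \<le> (norm a)\<^sup>2 + (norm b)\<^sup>2"
    using sum_squares_bound[of "norm a" "norm b"] by (simp add: mult.assoc)
  have h: "- (a \<bullet> b) \<le> ((norm a)\<^sup>2 + (norm b)\<^sup>2) / 2" using h1 h2 by (rule aux_half)
  show ?thesis
  proof (cases "a \<bullet> b \<le> 0")
    case True
    then have "p * (- (a \<bullet> b)) \<le> - (a \<bullet> b)" using p
      by (intro mult_left_le_one_le) auto
    then show ?thesis using h by simp
  next
    case False
    then have "0 \<le> p * (a \<bullet> b)" using p by simp
    moreover have "0 \<le> ((norm a)\<^sup>2 + (norm b)\<^sup>2) / 2" by simp
    ultimately show ?thesis by linarith
  qed
qed

abbreviation "Vd t \<equiv> - lam * (\<Sum>i<N. \<Sum>j<N. ps i j (t - \<tau>) * ((v i t - v j t) \<bullet> (v i (t - \<tau>) - v j (t - \<tau>))))"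

lemma Vd_bound1: "Vd t \<le> lam * (VF N v t + VF N v (t - \<tau>))"
proof -
  have "(\<Sum>i<N. \<Sum>j<N. - (ps i j (t - \<tau>) * ((v i t - v j t) \<bullet> (v i (t - \<tau>) - v j (t - \<tau>)))))
     \<le> (\<Sum>i<N. \<Sum>j<N. ((norm (v i t - v j t))\<^sup>2 + (norm (v i (t - \<tau>) - v j (t - \<tau>)))\<^sup>2) / 2)"
    by (intro sum_mono term_bound1 ps_pos ps_le1)
  also have "\<dots> = VF N v t + VF N v (t - \<tau>)"
    unfolding VF_def by (simp add: sum.distrib add_divide_distrib sum_divide_distrib)
  finally have h: "- (\<Sum>i<N. \<Sum>j<N. ps i j (t - \<tau>) * ((v i t - v j t) \<bullet> (v i (t - \<tau>) - v j (t - \<tau>))))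
      \<le> VF N v t + VF N v (t - \<tau>)" by (simp add: sum_negf)
  have "lam * (- (\<Sum>i<N. \<Sum>j<N. ps i j (t - \<tau>) * ((v i t - v j t) \<bullet> (v i (t - \<tau>) - v j (t - \<tau>)))))
      \<le> lam * (VF N v t + VF N v (t - \<tau>))" using lam by (intro mult_left_mono[OF h]) auto
  then show ?thesis by simp
qed

lemma phase1:
  assumes t0: "0 \<le> t" and tt: "t \<le> \<tau>"
  shows "VF N v t \<le> 2 * Mv * exp (lam * \<tau>) - Mv"
proof -
  define E where "E s = (VF N v s + Mv) * exp (- lam * s)" for s
  have "E t \<le> E 0"
  proof (rule DERIV_nonpos_imp_decreasing_open[OF t0])
    fix s assume s: "0 < s" "s < t"
    have hd: "(VF N v has_real_derivative Vd s) (at s)" using V_deriv s by simp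
    have "(E has_real_derivative (Vd s * exp (- lam * s) + (VF N v s + Mv) * (exp (- lam * s) * (- lam)))) (at s)"
      unfolding E_def[abs_def]
      by (auto intro!: derivative_eq_intros hd)
    moreover have "Vd s * exp (- lam * s) + (VF N v s + Mv) * (exp (- lam * s) * (- lam)) \<le> 0"
    proof -
      have "VF N v (s - \<tau>) \<le> Mv" using s tt by (intro V_le_M) auto
      then have "Vd s \<le> lam * (VF N v s + Mv)" using Vd_bound1[of s] lam
        by (smt (verit) mult_left_mono)
      then have "exp (- lam * s) * (Vd s - lam * (VF N v s + Mv)) \<le> 0"
        by (simp add: mult_nonneg_nonpos)
      then show ?thesis by (simp add: algebra_simps)
    qed
    ultimately show "\<exists>y. (E has_real_derivative y) (at s) \<and> y \<le> 0" by blast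
  next
    have "continuous_on {0..t} (VF N v)" using V_cont by (rule continuous_on_subset) (use tau in auto)
    then show "continuous_on {0..t} E" unfolding E_def[abs_def] by (intro continuous_intros)
  qed
  also have "E 0 \<le> 2 * Mv" unfolding E_def using V_le_M[of 0] tau by simp
  finally have "(VF N v t + Mv) * exp (- lam * t) \<le> 2 * Mv" unfolding E_def .
  then have "VF N v t + Mv \<le> 2 * Mv * exp (lam * t)"
    by (simp add: exp_minus field_simps)
  also have "\<dots> \<le> 2 * Mv * exp (lam * \<tau>)"
    using M_nonneg lam tt by (intro mult_left_mono) auto
  finally show ?thesis by simp
qed


abbreviation "D \<equiv> DF N \<psi> x v"
definition "Q u = integral {-\<tau>..u} D"
definition "R u = integral {-\<tau>..u} Q"
definition "Gt t = \<tau> * Q (t - \<tau>) - R (t - \<tau>) + R (t - 2 * \<tau>)"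

lemma Dc: "continuous_on {-\<tau>..b} D"
  using D_cont by (rule continuous_on_subset) auto

lemma Q_deriv: "u > -\<tau> \<Longrightarrow> (Q has_real_derivative D u) (at u)"
  unfolding Q_def[abs_def] by (rule indef_deriv[OF Dc])

lemma Q_cont: "continuous_on {-\<tau>..b} Q"
  unfolding Q_def[abs_def] by (rule indef_cont[OF Dc])

lemma R_deriv: "u > -\<tau> \<Longrightarrow> (R has_real_derivative Q u) (at u)"
  unfolding R_def[abs_def] by (rule indef_deriv[OF Q_cont])

lemma R_cont: "continuous_on {-\<tau>..b} R"
  unfolding R_def[abs_def] by (rule indef_cont[OF Q_cont])

lemma int_diff_gen:
  fixes f :: "real \<Rightarrow> real"
  assumes c: "\<And>b. continuous_on {-\<tau>..b} f" and ab: "-\<tau> \<le> a" "a \<le> b"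
  shows "integral {a..b} f = integral {-\<tau>..b} f - integral {-\<tau>..a} f"
proof -
  have "integral {-\<tau>..a} f + integral {a..b} f = integral {-\<tau>..b} f"
    using Henstock_Kurzweil_Integration.integral_combine[where a="-\<tau>" and c=a and b=b and f=f] ab integrable_continuous_real[OF c[of b]] by simp
  then show ?thesis by simp
qed

lemma Q_diff: "-\<tau> \<le> a \<Longrightarrow> a \<le> b \<Longrightarrow> integral {a..b} D = Q b - Q a"
  unfolding Q_def by (rule int_diff_gen[OF Dc])

lemma R_diff: "-\<tau> \<le> a \<Longrightarrow> a \<le> b \<Longrightarrow> integral {a..b} Q = R b - R a"
  unfolding R_def by (rule int_diff_gen[OF Q_cont])

lemma Q_mono: "-\<tau> \<le> a \<Longrightarrow> a \<le> b \<Longrightarrow> Q a \<le> Q b"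
proof -
  assume ab: "-\<tau> \<le> a" "a \<le> b"
  have sub: "{a..b} \<subseteq> {-\<tau>..b}" using ab by auto
  have "0 \<le> integral {a..b} D"
    by (rule integral_nonneg) (auto intro!: integrable_continuous_real continuous_on_subset[OF Dc sub] D_nonneg)
  then show ?thesis using Q_diff[OF ab] by simp
qed

lemma R_m_tau: "R (-\<tau>) = 0" unfolding R_def by simp

lemma Gt_nonneg: assumes t: "t \<ge> \<tau>" shows "Gt t \<ge> 0"
proof -
  have le: "-\<tau> \<le> t - 2 * \<tau>" "t - 2 * \<tau> \<le> t - \<tau>" using t tau by auto
  have sub: "{t - 2 * \<tau>..t - \<tau>} \<subseteq> {-\<tau>..t - \<tau>}" using le by auto
  have "integral {t - 2 * \<tau>..t - \<tau>} Q \<le> integral {t - 2 * \<tau>..t - \<tau>} (\<lambda>_. Q (t - \<tau>))"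
    by (rule integral_le) (auto intro!: integrable_continuous_real continuous_on_subset[OF Q_cont sub] Q_mono, use le in linarith)
  also have "\<dots> = \<tau> * Q (t - \<tau>)" using le by simp
  finally show ?thesis using R_diff[OF le] unfolding Gt_def by simp
qed

lemma shift_deriv:
  fixes f :: "real \<Rightarrow> real"
  assumes "(f has_real_derivative f') (at (t - c))"
  shows "((\<lambda>s. f (s - c)) has_real_derivative f') (at t)"
proof -
  have "((\<lambda>s. s - c) has_real_derivative 1) (at t)" by (auto intro!: derivative_eq_intros)
  from DERIV_chain2[OF assms this] show ?thesis by simp
qed

lemma Gt_deriv: assumes t: "t > \<tau>"
  shows "(Gt has_real_derivative (\<tau> * D (t - \<tau>) - Q (t - \<tau>) + Q (t - 2 * \<tau>))) (at t)"
proof -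
  have q: "(Q has_real_derivative D (t - \<tau>)) (at (t - \<tau>))" using t tau by (intro Q_deriv) auto
  have r1: "(R has_real_derivative Q (t - \<tau>)) (at (t - \<tau>))" using t tau by (intro R_deriv) auto
  have r2: "(R has_real_derivative Q (t - 2 * \<tau>)) (at (t - 2 * \<tau>))" using t tau by (intro R_deriv) auto
  show ?thesis unfolding Gt_def[abs_def]
    by (intro DERIV_add DERIV_diff DERIV_cmult shift_deriv q r1 r2)
qed

lemma Gt_cont: "continuous_on {\<tau>..b} Gt"
proof -
  have c1: "continuous_on {\<tau>..b} (\<lambda>t. Q (t - \<tau>))"
    by (rule continuous_on_compose2[OF Q_cont[of b]]) (auto intro!: continuous_intros simp: tau less_imp_le)
  have c2: "continuous_on {\<tau>..b} (\<lambda>t. R (t - \<tau>))"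
    by (rule continuous_on_compose2[OF R_cont[of b]]) (auto intro!: continuous_intros simp: tau less_imp_le)
  have c3: "continuous_on {\<tau>..b} (\<lambda>t. R (t - 2 * \<tau>))"
    by (rule continuous_on_compose2[OF R_cont[of b]]) (auto intro!: continuous_intros simp: tau less_imp_le)
  show ?thesis unfolding Gt_def[abs_def] by (intro continuous_intros c1 c2 c3)
qed

lemma J_eq: "integral {-\<tau>..0} (\<lambda>th. integral {th..0} D) = Gt \<tau>"
proof -
  have "integral {-\<tau>..0} (\<lambda>th. integral {th..0} D) = integral {-\<tau>..0} (\<lambda>th. Q 0 - Q th)"
    by (rule integral_cong) (rule Q_diff, auto)
  also have "\<dots> = \<tau> * Q 0 - R 0"
  proof -
    have "((\<lambda>th. Q 0 - Q th) has_integral (\<tau> * Q 0 - R 0)) {-\<tau>..0}"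
    proof (rule has_integral_diff)
      show "((\<lambda>th. Q 0) has_integral \<tau> * Q 0) {-\<tau>..0}"
        using has_integral_const_real[of "Q 0" "-\<tau>" 0] tau by simp
      show "(Q has_integral R 0) {-\<tau>..0}"
        unfolding R_def by (intro integrable_integral integrable_continuous_real Q_cont)
    qed
    then show ?thesis by (rule integral_unique)
  qed
  also have "\<dots> = Gt \<tau>" unfolding Gt_def using R_m_tau by simp
  finally show ?thesis .
qed


lemma F_norm_bound:
  "norm (F i s) \<le> (lam / real N) * (\<Sum>j<N. ps i j (s - \<tau>) * norm (v j (s - \<tau>) - v i (s - \<tau>)))"
proof -
  have "norm (\<Sum>j<N. ps i j (s - \<tau>) *\<^sub>R (v j (s - \<tau>) - v i (s - \<tau>)))
      \<le> (\<Sum>j<N. norm (ps i j (s - \<tau>) *\<^sub>R (v j (s - \<tau>) - v i (s - \<tau>))))" by (rule norm_sum)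
  also have "\<dots> = (\<Sum>j<N. ps i j (s - \<tau>) * norm (v j (s - \<tau>) - v i (s - \<tau>)))"
    using ps_pos by (intro sum.cong) (auto simp: less_imp_le)
  finally have h: "norm (\<Sum>j<N. ps i j (s - \<tau>) *\<^sub>R (v j (s - \<tau>) - v i (s - \<tau>)))
      \<le> (\<Sum>j<N. ps i j (s - \<tau>) * norm (v j (s - \<tau>) - v i (s - \<tau>)))" .
  have "norm (F i s) = (lam / real N) * norm (\<Sum>j<N. ps i j (s - \<tau>) *\<^sub>R (v j (s - \<tau>) - v i (s - \<tau>)))"
    unfolding F_def using lam by simp
  also have "\<dots> \<le> (lam / real N) * (\<Sum>j<N. ps i j (s - \<tau>) * norm (v j (s - \<tau>) - v i (s - \<tau>)))"
    using lam by (intro mult_left_mono[OF h]) auto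
  finally show ?thesis .
qed

lemma F_sq_bound_i:
  "(norm (F i s))\<^sup>2 \<le> (lam\<^sup>2 / real N) * (\<Sum>j<N. ps i j (s - \<tau>) * (norm (v j (s - \<tau>) - v i (s - \<tau>)))\<^sup>2)"
proof -
  define p where "p j = ps i j (s - \<tau>)" for j
  define n where "n j = norm (v j (s - \<tau>) - v i (s - \<tau>))" for j
  have Npos: "real N > 0" using N by simp
  have "0 \<le> norm (F i s)" by simp
  then have "(norm (F i s))\<^sup>2 \<le> ((lam / real N) * (\<Sum>j<N. p j * n j))\<^sup>2"
    using F_norm_bound[of i s] unfolding p_def n_def by (intro power_mono) auto
  also have "\<dots> = (lam / real N)\<^sup>2 * (\<Sum>j<N. p j * n j)\<^sup>2" by (rule power_mult_distrib)
  also have "(\<Sum>j<N. p j * n j)\<^sup>2 \<le> real N * (\<Sum>j<N. p j * (n j)\<^sup>2)"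
  proof -
    have "(\<Sum>j<N. (p j * n j) * 1)\<^sup>2 \<le> (\<Sum>j<N. (p j * n j)\<^sup>2) * (\<Sum>j<N. 1\<^sup>2)"
      by (rule Cauchy_Schwarz_ineq_sum)
    also have "\<dots> = real N * (\<Sum>j<N. (p j * n j)\<^sup>2)" by simp
    also have "(\<Sum>j<N. (p j * n j)\<^sup>2) \<le> (\<Sum>j<N. p j * (n j)\<^sup>2)"
    proof (rule sum_mono)
      fix j
      have "0 < p j" "p j \<le> 1" unfolding p_def using ps_pos ps_le1 by auto
      then have "(p j)\<^sup>2 \<le> p j" by (simp add: power2_eq_square mult_le_cancel_left1)
      then show "(p j * n j)\<^sup>2 \<le> p j * (n j)\<^sup>2"
        by (simp add: power_mult_distrib mult_right_mono)
    qed
    then have "real N * (\<Sum>j<N. (p j * n j)\<^sup>2) \<le> real N * (\<Sum>j<N. p j * (n j)\<^sup>2)"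
      by (rule mult_left_mono) simp
    finally show ?thesis by simp
  qed
  then have "(lam / real N)\<^sup>2 * (\<Sum>j<N. p j * n j)\<^sup>2 \<le> (lam / real N)\<^sup>2 * (real N * (\<Sum>j<N. p j * (n j)\<^sup>2))"
    by (rule mult_left_mono) simp
  also have "\<dots> = (lam\<^sup>2 / real N) * (\<Sum>j<N. p j * (n j)\<^sup>2)"
    using Npos by (simp add: power2_eq_square field_simps)
  finally show ?thesis unfolding p_def n_def .
qed

lemma F_sq_bound:
  "(\<Sum>i<N. (norm (F i s))\<^sup>2) \<le> (2 * lam\<^sup>2 / real N) * D (s - \<tau>)"
proof -
  have "(\<Sum>i<N. (norm (F i s))\<^sup>2) \<le> (\<Sum>i<N. (lam\<^sup>2 / real N) * (\<Sum>j<N. ps i j (s - \<tau>) * (norm (v j (s - \<tau>) - v i (s - \<tau>)))\<^sup>2))"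
    by (rule sum_mono) (rule F_sq_bound_i)
  also have "\<dots> = (2 * lam\<^sup>2 / real N) * D (s - \<tau>)"
    unfolding DF_def ps_def by (simp add: sum_distrib_left)
  finally show ?thesis .
qed


lemma ps_shift_cont: "i < N \<Longrightarrow> j < N \<Longrightarrow> continuous_on {0..b} (\<lambda>s. ps i j (s - \<tau>))"
  by (rule continuous_on_compose2[OF ps_cont]) (auto intro!: continuous_intros simp: tau less_imp_le)

lemma v_shift_cont: "i < N \<Longrightarrow> continuous_on {0..b} (\<lambda>s. v i (s - \<tau>))"
  by (rule continuous_on_compose2[OF cont_v]) (auto intro!: continuous_intros simp: tau less_imp_le)

lemma F_cont: "i < N \<Longrightarrow> continuous_on {0..b} (F i)"
  unfolding F_def[abs_def]
  by (intro continuous_intros continuous_on_sum ps_shift_cont v_shift_cont) auto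

lemma F_cont': "i < N \<Longrightarrow> t \<ge> \<tau> \<Longrightarrow> continuous_on {t - \<tau>..t} (F i)"
  by (rule continuous_on_subset[OF F_cont]) auto

lemma u_int: assumes i: "i < N" and t: "t \<ge> \<tau>"
  shows "(F i has_integral (v i t - v i (t - \<tau>))) {t - \<tau>..t}"
proof (rule fundamental_theorem_of_calculus_interior)
  show "t - \<tau> \<le> t" using tau by simp
  show "continuous_on {t - \<tau>..t} (v i)"
    by (rule continuous_on_subset[OF cont_v[OF i]]) (use t in auto)
  fix s assume "s \<in> {t - \<tau><..<t}"
  then have "s > 0" using t by auto
  then show "(v i has_vector_derivative F i s) (at s)" by (rule ode_v'[OF i])
qed

lemma u_sq: assumes i: "i < N" and t: "t \<ge> \<tau>"
  shows "(norm (v i t - v i (t - \<tau>)))\<^sup>2 \<le> \<tau> * integral {t - \<tau>..t} (\<lambda>s. (norm (F i s))\<^sup>2)"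
proof -
  have cF: "continuous_on {t - \<tau>..t} (F i)" by (rule F_cont'[OF i t])
  have cnF: "continuous_on {t - \<tau>..t} (\<lambda>s. norm (F i s))" by (intro continuous_intros cF)
  have "v i t - v i (t - \<tau>) = integral {t - \<tau>..t} (F i)" using u_int[OF i t] by (simp add: integral_unique)
  then have "norm (v i t - v i (t - \<tau>)) \<le> integral {t - \<tau>..t} (\<lambda>s. norm (F i s))"
    using cF cnF by (auto intro!: integral_norm_bound_integral integrable_continuous_real)
  then have "(norm (v i t - v i (t - \<tau>)))\<^sup>2 \<le> (integral {t - \<tau>..t} (\<lambda>s. norm (F i s)))\<^sup>2"
    by (intro power_mono) auto
  also have "\<dots> \<le> (t - (t - \<tau>)) * integral {t - \<tau>..t} (\<lambda>s. (norm (F i s))\<^sup>2)"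
    using tau by (intro int_CS cnF) auto
  finally show ?thesis by simp
qed

lemma shiftD_int: assumes t: "t \<ge> \<tau>"
  shows "integral {t - \<tau>..t} (\<lambda>s. D (s - \<tau>)) = Q (t - \<tau>) - Q (t - 2 * \<tau>)"
proof -
  have "((\<lambda>s. D (s - \<tau>)) has_integral (Q (t - \<tau>) - Q (t - \<tau> - \<tau>))) {t - \<tau>..t}"
  proof (rule fundamental_theorem_of_calculus_interior)
    show "t - \<tau> \<le> t" using tau by simp
    show "continuous_on {t - \<tau>..t} (\<lambda>s. Q (s - \<tau>))"
      by (rule continuous_on_compose2[OF Q_cont[of t]]) (auto intro!: continuous_intros simp: tau less_imp_le, use t in linarith)
    fix s assume "s \<in> {t - \<tau><..<t}"
    then have "s - \<tau> > -\<tau>" using t by auto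
    then have "((\<lambda>s. Q (s - \<tau>)) has_real_derivative D (s - \<tau>)) (at s)"
      by (intro shift_deriv Q_deriv)
    then show "((\<lambda>s. Q (s - \<tau>)) has_vector_derivative D (s - \<tau>)) (at s)"
      by (simp add: has_real_derivative_iff_has_vector_derivative)
  qed
  then show ?thesis by (simp add: integral_unique)
qed

lemma u_sum: assumes t: "t \<ge> \<tau>"
  shows "real N * (\<Sum>i<N. (norm (v i t - v i (t - \<tau>)))\<^sup>2) \<le> 2 * \<tau> * lam\<^sup>2 * (Q (t - \<tau>) - Q (t - 2 * \<tau>))"
proof -
  have int1: "(\<lambda>s. (norm (F i s))\<^sup>2) integrable_on {t - \<tau>..t}" if "i \<in> {..<N}" for i
    using that by (intro integrable_continuous_real continuous_intros F_cont'[OF _ t]) auto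
  have cD: "continuous_on {t - \<tau>..t} (\<lambda>s. D (s - \<tau>))"
    by (rule continuous_on_compose2[OF D_cont]) (auto intro!: continuous_intros, use t in linarith)
  have "(\<Sum>i<N. (norm (v i t - v i (t - \<tau>)))\<^sup>2) \<le> (\<Sum>i<N. \<tau> * integral {t - \<tau>..t} (\<lambda>s. (norm (F i s))\<^sup>2))"
    by (intro sum_mono u_sq t) auto
  also have "\<dots> = \<tau> * integral {t - \<tau>..t} (\<lambda>s. \<Sum>i<N. (norm (F i s))\<^sup>2)"
    using integral_sum[of "{..<N}" "\<lambda>i s. (norm (F i s))\<^sup>2" "{t - \<tau>..t}"] int1 by (simp add: sum_distrib_left)
  also have "integral {t - \<tau>..t} (\<lambda>s. \<Sum>i<N. (norm (F i s))\<^sup>2) \<le> integral {t - \<tau>..t} (\<lambda>s. (2 * lam\<^sup>2 / real N) * D (s - \<tau>))"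
  proof (rule integral_le)
    show "(\<lambda>s. \<Sum>i<N. (norm (F i s))\<^sup>2) integrable_on {t - \<tau>..t}"
      by (intro integrable_sum int1) auto
    show "(\<lambda>s. (2 * lam\<^sup>2 / real N) * D (s - \<tau>)) integrable_on {t - \<tau>..t}"
      by (intro integrable_continuous_real continuous_intros cD)
    show "\<And>s. s \<in> {t - \<tau>..t} \<Longrightarrow> (\<Sum>i<N. (norm (F i s))\<^sup>2) \<le> (2 * lam\<^sup>2 / real N) * D (s - \<tau>)"
      by (rule F_sq_bound)
  qed
  also have "\<dots> = (2 * lam\<^sup>2 / real N) * (Q (t - \<tau>) - Q (t - 2 * \<tau>))"
    using shiftD_int[OF t] by simp
  finally have "(\<Sum>i<N. (norm (v i t - v i (t - \<tau>)))\<^sup>2) \<le> \<tau> * ((2 * lam\<^sup>2 / real N) * (Q (t - \<tau>) - Q (t - 2 * \<tau>)))"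
    using tau by (simp add: mult_left_mono)
  then have "real N * (\<Sum>i<N. (norm (v i t - v i (t - \<tau>)))\<^sup>2) \<le> real N * (\<tau> * ((2 * lam\<^sup>2 / real N) * (Q (t - \<tau>) - Q (t - 2 * \<tau>))))"
    by (rule mult_left_mono) simp
  also have "\<dots> = 2 * \<tau> * lam\<^sup>2 * (Q (t - \<tau>) - Q (t - 2 * \<tau>))" using N by simp
  finally show ?thesis .
qed


lemma term_bound2:
  fixes \<beta> \<mu> :: "'a::real_inner"
  assumes p: "0 < p" "p \<le> 1"
  shows "- (p * ((\<beta> + \<mu>) \<bullet> \<beta>)) \<le> - (p * (norm \<beta>)\<^sup>2) / 2 + (norm \<mu>)\<^sup>2 / 2"
proof -
  have h: "- (\<mu> \<bullet> \<beta>) \<le> ((norm \<mu>)\<^sup>2 + (norm \<beta>)\<^sup>2) / 2"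
    using term_bound1[of 1 \<mu> \<beta>] by simp
  have h2: "p * (- (\<mu> \<bullet> \<beta>)) \<le> p * (((norm \<mu>)\<^sup>2 + (norm \<beta>)\<^sup>2) / 2)"
    using p by (intro mult_left_mono[OF h]) auto
  have h3: "p * (norm \<mu>)\<^sup>2 \<le> (norm \<mu>)\<^sup>2"
    using p by (intro mult_left_le_one_le) auto
  have e: "(\<beta> + \<mu>) \<bullet> \<beta> = (norm \<beta>)\<^sup>2 + \<mu> \<bullet> \<beta>"
    by (simp add: inner_add_left power2_norm_eq_inner)
  show ?thesis unfolding e using h2 h3 by (simp add: algebra_simps)
qed

lemma diff_sq_le: "(norm (a - b :: 'a::real_normed_vector))\<^sup>2 \<le> 2 * (norm a)\<^sup>2 + 2 * (norm b)\<^sup>2"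
proof -
  have "norm (a - b) \<le> norm a + norm b" by (rule norm_triangle_ineq4)
  then have "(norm (a - b))\<^sup>2 \<le> (norm a + norm b)\<^sup>2" by (intro power_mono) auto
  also have "\<dots> \<le> 2 * (norm a)\<^sup>2 + 2 * (norm b)\<^sup>2"
    using sum_squares_bound[of "norm a" "norm b"] by (simp add: power2_sum)
  finally show ?thesis .
qed

lemma Vd_bound2:
  "Vd t \<le> - lam * D (t - \<tau>) + 2 * lam * (real N * (\<Sum>i<N. (norm (v i t - v i (t - \<tau>)))\<^sup>2))"
proof -
  define b where "b i = v i (t - \<tau>)" for i
  define u where "u i = v i t - v i (t - \<tau>)" for i
  have trm: "- (ps i j (t - \<tau>) * ((v i t - v j t) \<bullet> (v i (t - \<tau>) - v j (t - \<tau>))))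
      \<le> - (ps i j (t - \<tau>) * (norm (b j - b i))\<^sup>2) / 2 + ((norm (u i))\<^sup>2 + (norm (u j))\<^sup>2)" for i j
  proof -
    have eq: "v i t - v j t = (b i - b j) + (u i - u j)" unfolding b_def u_def by simp
    have "- (ps i j (t - \<tau>) * ((v i t - v j t) \<bullet> (v i (t - \<tau>) - v j (t - \<tau>))))
        = - (ps i j (t - \<tau>) * (((b i - b j) + (u i - u j)) \<bullet> (b i - b j)))"
      unfolding eq unfolding b_def by simp
    also have "\<dots> \<le> - (ps i j (t - \<tau>) * (norm (b i - b j))\<^sup>2) / 2 + (norm (u i - u j))\<^sup>2 / 2"
      by (intro term_bound2 ps_pos ps_le1)
    also have "(norm (u i - u j))\<^sup>2 / 2 \<le> (norm (u i))\<^sup>2 + (norm (u j))\<^sup>2"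
      using diff_sq_le[of "u i" "u j"] by simp
    finally show ?thesis by (simp add: norm_minus_commute)
  qed
  have "(\<Sum>i<N. \<Sum>j<N. - (ps i j (t - \<tau>) * ((v i t - v j t) \<bullet> (v i (t - \<tau>) - v j (t - \<tau>)))))
     \<le> (\<Sum>i<N. \<Sum>j<N. - (ps i j (t - \<tau>) * (norm (b j - b i))\<^sup>2) / 2 + ((norm (u i))\<^sup>2 + (norm (u j))\<^sup>2))"
    by (intro sum_mono trm)
  also have "\<dots> = - D (t - \<tau>) + 2 * (real N * (\<Sum>i<N. (norm (u i))\<^sup>2))"
  proof -
    have s1: "(\<Sum>i<N. \<Sum>j<N. - (ps i j (t - \<tau>) * (norm (b j - b i))\<^sup>2) / 2) = - D (t - \<tau>)"
      unfolding DF_def ps_def b_def by (simp add: sum_negf sum_divide_distrib)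
    have s2: "(\<Sum>i<N. \<Sum>j<N. (norm (u i))\<^sup>2) + (\<Sum>i<N. \<Sum>j<N. (norm (u j))\<^sup>2) = 2 * (real N * (\<Sum>i<N. (norm (u i))\<^sup>2))"
      by (simp add: sum_distrib_left)
    show ?thesis by (simp only: sum.distrib s1 s2)
  qed
  finally have h: "- (\<Sum>i<N. \<Sum>j<N. ps i j (t - \<tau>) * ((v i t - v j t) \<bullet> (v i (t - \<tau>) - v j (t - \<tau>))))
      \<le> - D (t - \<tau>) + 2 * (real N * (\<Sum>i<N. (norm (u i))\<^sup>2))" by (simp add: sum_negf)
  have "lam * (- (\<Sum>i<N. \<Sum>j<N. ps i j (t - \<tau>) * ((v i t - v j t) \<bullet> (v i (t - \<tau>) - v j (t - \<tau>)))))
      \<le> lam * (- D (t - \<tau>) + 2 * (real N * (\<Sum>i<N. (norm (u i))\<^sup>2)))"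
    using lam by (intro mult_left_mono[OF h]) auto
  then show ?thesis unfolding u_def by (simp add: algebra_simps)
qed

definition "Lf t = VF N v t + 4 * \<tau> * lam ^ 3 * Gt t"

lemma Lf_deriv_nonpos:
  assumes t: "t > \<tau>"
  shows "Vd t + 4 * \<tau> * lam ^ 3 * (\<tau> * D (t - \<tau>) - Q (t - \<tau>) + Q (t - 2 * \<tau>)) \<le> 0"
proof -
  have "Vd t \<le> - lam * D (t - \<tau>) + 2 * lam * (2 * \<tau> * lam\<^sup>2 * (Q (t - \<tau>) - Q (t - 2 * \<tau>)))"
    using Vd_bound2[of t] u_sum[of t] t lam
    by (smt (verit) mult_left_mono)
  then have "Vd t + 4 * \<tau> * lam ^ 3 * (\<tau> * D (t - \<tau>) - Q (t - \<tau>) + Q (t - 2 * \<tau>))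
      \<le> - lam * D (t - \<tau>) + 4 * \<tau>\<^sup>2 * lam ^ 3 * D (t - \<tau>)"
    by (simp add: algebra_simps power2_eq_square power3_eq_cube)
  also have "\<dots> = lam * D (t - \<tau>) * (4 * (lam * \<tau>)\<^sup>2 - 1)"
    by (simp add: algebra_simps power2_eq_square power3_eq_cube)
  also have "\<dots> \<le> 0"
  proof -
    have "(lam * \<tau>)\<^sup>2 \<le> (1/2)\<^sup>2" using lam tau lt by (intro power_mono) auto
    then have "4 * (lam * \<tau>)\<^sup>2 - 1 \<le> 0" by (simp add: power2_eq_square)
    moreover have "0 \<le> lam * D (t - \<tau>)" using lam D_nonneg by simp
    ultimately show ?thesis by (simp add: mult_nonneg_nonpos)
  qed
  finally show ?thesis .
qed

lemma phase2: assumes t: "t \<ge> \<tau>" shows "Lf t \<le> Lf \<tau>"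
proof (rule DERIV_nonpos_imp_decreasing_open[OF t])
  fix s assume s: "\<tau> < s" "s < t"
  have "(Lf has_real_derivative Vd s + 4 * \<tau> * lam ^ 3 * (\<tau> * D (s - \<tau>) - Q (s - \<tau>) + Q (s - 2 * \<tau>))) (at s)"
    unfolding Lf_def[abs_def]
    using s tau by (intro DERIV_add DERIV_cmult V_deriv Gt_deriv) auto
  then show "\<exists>y. (Lf has_real_derivative y) (at s) \<and> y \<le> 0"
    using Lf_deriv_nonpos[OF s(1)] by blast
next
  have "continuous_on {\<tau>..t} (VF N v)" by (rule continuous_on_subset[OF V_cont]) (use tau in auto)
  then show "continuous_on {\<tau>..t} Lf" unfolding Lf_def[abs_def]
    by (intro continuous_intros Gt_cont)
qed


abbreviation "L0 \<equiv> L0F N lam \<tau> \<psi> x v"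

lemma L0_eq: "L0 = (2 * lam * \<tau> + 1) * exp (2 * lam * \<tau>) * Mv + 4 * \<tau> * lam ^ 3 * Gt \<tau>"
  unfolding L0F_def J_eq by simp

lemma exp_ineq: fixes a :: real assumes a: "0 \<le> a" shows "2 * exp a - 1 \<le> (2 * a + 1) * exp (2 * a)"
proof -
  have "0 \<le> (exp a - 1)\<^sup>2" by (rule zero_le_power2)
  then have "2 * exp a - 1 \<le> (exp a)\<^sup>2" by (simp add: power2_eq_square algebra_simps)
  also have "(exp a)\<^sup>2 = exp (2 * a)" by (simp add: power2_eq_square exp_add[symmetric])
  also have "exp (2 * a) \<le> (2 * a + 1) * exp (2 * a)" using a by simp
  finally show ?thesis .
qed

lemma C_bound: "2 * Mv * exp (lam * \<tau>) - Mv \<le> (2 * lam * \<tau> + 1) * exp (2 * lam * \<tau>) * Mv"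
proof -
  have "Mv * (2 * exp (lam * \<tau>) - 1) \<le> Mv * ((2 * (lam * \<tau>) + 1) * exp (2 * (lam * \<tau>)))"
    using M_nonneg lam tau by (intro mult_left_mono exp_ineq) auto
  then show ?thesis by (simp add: algebra_simps)
qed

lemma V_le_L0: assumes t: "t \<ge> 0" shows "VF N v t \<le> L0"
proof -
  have G0: "0 \<le> 4 * \<tau> * lam ^ 3 * Gt \<tau>" using Gt_nonneg[of \<tau>] lam tau by simp
  show ?thesis
  proof (cases "t \<le> \<tau>")
    case True
    then have "VF N v t \<le> 2 * Mv * exp (lam * \<tau>) - Mv" using phase1 t by simp
    then show ?thesis unfolding L0_eq using C_bound G0 by linarith
  next
    case False
    then have tt: "t \<ge> \<tau>" by simp
    have "VF N v t \<le> Lf t" unfolding Lf_def using Gt_nonneg[OF tt] lam tau by simp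
    also have "\<dots> \<le> Lf \<tau>" by (rule phase2[OF tt])
    also have "\<dots> \<le> L0" unfolding Lf_def L0_eq using phase1[of \<tau>] tau C_bound by simp
    finally show ?thesis .
  qed
qed

lemma w_bound: assumes t: "t \<ge> 0" and ij: "i < N" "j < N"
  shows "norm (v i t - v j t) \<le> sqrt (2 * L0)"
proof -
  have "(norm (v i t - v j t))\<^sup>2 \<le> (\<Sum>j'<N. (norm (v i t - v j' t))\<^sup>2)"
    using ij by (intro member_le_sum) auto
  also have "\<dots> \<le> (\<Sum>i'<N. \<Sum>j'<N. (norm (v i' t - v j' t))\<^sup>2)"
    using ij by (intro member_le_sum[where f="\<lambda>i'. \<Sum>j'<N. (norm (v i' t - v j' t))\<^sup>2"] sum_nonneg) auto
  also have "\<dots> = 2 * VF N v t" unfolding VF_def by simp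
  also have "\<dots> \<le> 2 * L0" using V_le_L0[OF t] by simp
  finally have "(norm (v i t - v j t))\<^sup>2 \<le> 2 * L0" .
  then show ?thesis by (rule real_le_rsqrt)
qed

lemma x_bound: assumes t: "t \<ge> 0" and ij: "i < N" "j < N"
  shows "norm (x i t - x j t) \<le> norm (x i 0 - x j 0) + sqrt (2 * L0) * t"
proof -
  have hi: "((\<lambda>s. v i s - v j s) has_integral ((x i t - x j t) - (x i 0 - x j 0))) {0..t}"
  proof (rule fundamental_theorem_of_calculus_interior[where f="\<lambda>s. x i s - x j s", OF t])
    show "continuous_on {0..t} (\<lambda>s. x i s - x j s)"
      by (intro continuous_intros continuous_on_subset[OF cont_x] ij) (use tau in auto)
    fix s assume "s \<in> {0<..<t}"
    then have "s > 0" by simp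
    then show "((\<lambda>s. x i s - x j s) has_vector_derivative v i s - v j s) (at s)"
      by (intro has_vector_derivative_diff ode_x ij)
  qed
  have hi': "((\<lambda>s. v i s - v j s) has_integral ((x i t - x j t) - (x i 0 - x j 0))) (cbox 0 t)"
    using hi by simp
  have hb: "\<And>s. s \<in> cbox 0 t \<Longrightarrow> norm (v i s - v j s) \<le> sqrt (2 * L0)"
    using w_bound ij by auto
  have B0: "0 \<le> sqrt (2 * L0)" using w_bound[OF t ij] norm_ge_zero order_trans by blast
  from has_integral_bound[OF B0 hi' hb]
  have "norm ((x i t - x j t) - (x i 0 - x j 0)) \<le> sqrt (2 * L0) * t" using t by simp
  moreover have "norm (x i t - x j t) \<le> norm (x i 0 - x j 0) + norm ((x i t - x j t) - (x i 0 - x j 0))"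
    by (rule norm_triangle_sub)
  ultimately show ?thesis by linarith
qed

lemma finite_pairs: "finite {f i j | i j. i < (n::nat) \<and> j < n}"
proof -
  have "{f i j | i j. i < n \<and> j < n} = (\<lambda>(i, j). f i j) ` ({..<n} \<times> {..<n})" by auto
  then show ?thesis by simp
qed

lemma final:
  assumes psi_mono: "\<And>r s. 0 \<le> r \<Longrightarrow> r \<le> s \<Longrightarrow> \<psi> s \<le> \<psi> r"
    and t: "t \<ge> 0"
  shows "phiF N \<psi> x t \<ge> \<psi> (dXF N x 0 + sqrt (2 * L0) * t)"
  unfolding phiF_def
proof (rule Min.boundedI)
  show "finite {\<psi> (norm (x i t - x j t)) |i j. i < N \<and> j < N}" by (rule finite_pairs)
  have "\<exists>i j. \<psi> (norm (x 0 t - x 0 t)) = \<psi> (norm (x i t - x j t)) \<and> i < N \<and> j < N"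
    using N by (intro exI[of _ 0]) auto
  then show "{\<psi> (norm (x i t - x j t)) |i j. i < N \<and> j < N} \<noteq> {}" by blast
  fix a assume "a \<in> {\<psi> (norm (x i t - x j t)) |i j. i < N \<and> j < N}"
  then obtain i j where ij: "i < N" "j < N" and a: "a = \<psi> (norm (x i t - x j t))" by auto
  have "norm (x i 0 - x j 0) \<le> dXF N x 0" unfolding dXF_def
    using ij by (intro Max_ge finite_pairs) auto
  then have "norm (x i t - x j t) \<le> dXF N x 0 + sqrt (2 * L0) * t"
    using x_bound[OF t ij] by linarith
  then show "\<psi> (dXF N x 0 + sqrt (2 * L0) * t) \<le> a" unfolding a
    by (intro psi_mono) auto
qed

end

theorem lemma3p8:
  fixes N :: nat and lam \<tau> :: real and \<psi> :: "real \<Rightarrow> real"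
    and x v :: "nat \<Rightarrow> real \<Rightarrow> real^'d"
  assumes N: "N \<ge> 1"
    and lam: "lam > 0" and tau: "\<tau> > 0" and lt: "lam * \<tau> \<le> 1/2"
    and psi_pos: "\<And>r. r \<ge> 0 \<Longrightarrow> \<psi> r > 0"
    and psi_le1: "\<And>r. r \<ge> 0 \<Longrightarrow> \<psi> r \<le> 1"
    and psi_mono: "\<And>r s. 0 \<le> r \<Longrightarrow> r \<le> s \<Longrightarrow> \<psi> s \<le> \<psi> r"
    and psi_diff: "\<And>r. r \<ge> 0 \<Longrightarrow> \<psi> differentiable (at r within {0..})"
    and cont_x: "\<And>i. i < N \<Longrightarrow> continuous_on {-\<tau>..} (x i)"
    and cont_v: "\<And>i. i < N \<Longrightarrow> continuous_on {-\<tau>..} (v i)"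
    and init_x: "\<And>i. i < N \<Longrightarrow> x i differentiable_on {-\<tau><..<0}"
    and init_v: "\<And>i. i < N \<Longrightarrow> v i differentiable_on {-\<tau><..<0}"
    and ode_x: "\<And>i t. i < N \<Longrightarrow> t > 0 \<Longrightarrow> (x i has_vector_derivative v i t) (at t)"
    and ode_v: "\<And>i t. i < N \<Longrightarrow> t > 0 \<Longrightarrow>
       (v i has_vector_derivative
          (lam / real N) *\<^sub>R (\<Sum>j<N. \<psi> (norm (x i (t - \<tau>) - x j (t - \<tau>))) *\<^sub>R
                                     (v j (t - \<tau>) - v i (t - \<tau>)))) (at t)"
  shows "\<forall>t > \<tau>. phiF N \<psi> x t \<ge> \<psi> (dXF N x 0 + sqrt (2 * L0F N lam \<tau> \<psi> x v) * t)"
proof -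
  interpret c: cs N lam \<tau> \<psi> x v
    by unfold_locales (fact N lam tau lt psi_pos psi_le1 psi_diff cont_x cont_v ode_x ode_v)+
  show ?thesis using c.final[OF psi_mono] tau by auto
qed

end
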